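(* Let $f:G\to H$, $f':G'\to H'$, $\varphi':G'\to G$ and $\varphi:H'\to H$ be group homomorphisms with $f\circ\varphi'=\varphi\circ f'$, and suppose this square is a weak pullback. If $\varphi$ is surjective or $f'$ does not admit a global section, then $\mathrm{sec}(f')\leq \mathrm{sec}(f)$.
   Context: The commutative square $f\circ\varphi'=\varphi\circ f'$ is a weak pullback if for every group $L$ and homomorphisms $\alpha:L\to H'$, $\beta:L\to G$ with $\varphi\circ\alpha=f\circ\beta$, there exists a (not necessarily unique) homomorphism $h:L\to G'$ with $f'\circ h=\alpha$ and $\varphi'\circ h=\beta$. For a homomorphism $f:G\to H$ and a subgroup $L\le H$, a local section of $f$ on $L$ is a homomorphism $s:L\to G$ with $f\circ s=\mathrm{incl}_L$ (the inclusion $L\hookrightarrow H$); a global section is a local section on $L=H$. The sectional number $\mathrm{sec}(f)$ is the least positive integer $m$ such that there exist proper subgroups $H_1,\ldots,H_m$ of $H$ with $H=H_1\cup\cdots\cup H_m$ and such that $f$ admits a local section on each $H_i$; $\mathrm{sec}(f)=\infty$ if no such $m$ exists. *)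

theory Defs
  imports "HOL-Algebra.Algebra" "HOL-Library.Extended_Nat"
begin

definition local_section ::
  "('a, 'm) monoid_scheme \<Rightarrow> ('b, 'n) monoid_scheme \<Rightarrow> ('a \<Rightarrow> 'b) \<Rightarrow> 'b set \<Rightarrow> ('b \<Rightarrow> 'a) \<Rightarrow> bool"
  where "local_section G H f L s \<longleftrightarrow>
           subgroup L H \<and> s \<in> hom (H\<lparr>carrier := L\<rparr>) G \<and> (\<forall>x\<in>L. f (s x) = x)"

definition has_local_section ::
  "('a, 'm) monoid_scheme \<Rightarrow> ('b, 'n) monoid_scheme \<Rightarrow> ('a \<Rightarrow> 'b) \<Rightarrow> 'b set \<Rightarrow> bool"
  where "has_local_section G H f L \<longleftrightarrow> (\<exists>s. local_section G H f L s)"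

definition has_global_section ::
  "('a, 'm) monoid_scheme \<Rightarrow> ('b, 'n) monoid_scheme \<Rightarrow> ('a \<Rightarrow> 'b) \<Rightarrow> bool"
  where "has_global_section G H f \<longleftrightarrow> has_local_section G H f (carrier H)"

definition sec_cover ::
  "('a, 'm) monoid_scheme \<Rightarrow> ('b, 'n) monoid_scheme \<Rightarrow> ('a \<Rightarrow> 'b) \<Rightarrow> nat \<Rightarrow> bool"
  where "sec_cover G H f m \<longleftrightarrow>
           (\<exists>Hs :: nat \<Rightarrow> 'b set.
              (\<forall>i<m. subgroup (Hs i) H \<and> Hs i \<noteq> carrier H \<and> has_local_section G H f (Hs i))
              \<and> (\<Union>i<m. Hs i) = carrier H)"

text \<open>Sectional number; \<infinity> (Inf of the empty set in enat) if no such m exists.\<close>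
definition sectional_number ::
  "('a, 'm) monoid_scheme \<Rightarrow> ('b, 'n) monoid_scheme \<Rightarrow> ('a \<Rightarrow> 'b) \<Rightarrow> enat"
  where "sectional_number G H f = Inf {enat m | m. 0 < m \<and> sec_cover G H f m}"

text \<open>Weak pullback property of the square  f \<circ> phi' = phi \<circ> f'  (G' \<rightarrow> G \<rightarrow> H, G' \<rightarrow> H' \<rightarrow> H),
  tested against all groups L whose elements live in the type 'l.\<close>
definition weak_pullback ::
  "'l itself \<Rightarrow> ('a, 'm1) monoid_scheme \<Rightarrow> ('b, 'm2) monoid_scheme \<Rightarrow>
   ('c, 'm3) monoid_scheme \<Rightarrow> ('d, 'm4) monoid_scheme \<Rightarrow>
   ('a \<Rightarrow> 'b) \<Rightarrow> ('c \<Rightarrow> 'd) \<Rightarrow> ('c \<Rightarrow> 'a) \<Rightarrow> ('d \<Rightarrow> 'b) \<Rightarrow> bool"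
  where "weak_pullback (_ :: 'l itself) G H G' H' f f' \<phi>' \<phi> \<longleftrightarrow>
    (\<forall>(L :: 'l monoid) \<alpha> \<beta>. group L \<and> \<alpha> \<in> hom L H' \<and> \<beta> \<in> hom L G \<and>
        (\<forall>x\<in>carrier L. \<phi> (\<alpha> x) = f (\<beta> x)) \<longrightarrow>
      (\<exists>h \<in> hom L G'. \<forall>x\<in>carrier L. f' (h x) = \<alpha> x \<and> \<phi>' (h x) = \<beta> x))"

end

theory Submission
  imports Defs
begin

lemma preimage_subgroup:
  assumes "group H" "group H'" "\<phi> \<in> hom H' H" "subgroup K H"
  shows "subgroup {x \<in> carrier H'. \<phi> x \<in> K} H'"
proof -
  interpret gh: group_hom H' H \<phi> using assms by (simp add: group_hom_def group_hom_axioms_def)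
  show ?thesis
  proof
    show "{x \<in> carrier H'. \<phi> x \<in> K} \<subseteq> carrier H'" by auto
  next
    fix x y assume "x \<in> {x \<in> carrier H'. \<phi> x \<in> K}" "y \<in> {x \<in> carrier H'. \<phi> x \<in> K}"
    then show "x \<otimes>\<^bsub>H'\<^esub> y \<in> {x \<in> carrier H'. \<phi> x \<in> K}"
      using assms(4) by (auto intro: subgroup.m_closed)
  next
    show "\<one>\<^bsub>H'\<^esub> \<in> {x \<in> carrier H'. \<phi> x \<in> K}"
      using assms(4) by (auto intro: subgroup.one_closed)
  next
    fix x assume "x \<in> {x \<in> carrier H'. \<phi> x \<in> K}"
    then show "inv\<^bsub>H'\<^esub> x \<in> {x \<in> carrier H'. \<phi> x \<in> K}"
      using assms(4) by (auto intro: subgroup.m_inv_closed)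
  qed
qed

lemma cover_transfer:
  fixes G :: "'a monoid" and H :: "'b monoid" and G' :: "'c monoid" and H' :: "'d monoid"
    and f :: "'a \<Rightarrow> 'b" and f' :: "'c \<Rightarrow> 'd" and \<phi>' :: "'c \<Rightarrow> 'a" and \<phi> :: "'d \<Rightarrow> 'b"
  assumes "group G" and "group H" and "group G'" and "group H'"
    and "f \<in> hom G H" and "f' \<in> hom G' H'" and "\<phi>' \<in> hom G' G" and "\<phi> \<in> hom H' H"
    and wp: "weak_pullback TYPE('d) G H G' H' f f' \<phi>' \<phi>"
    and sg: "subgroup K H" and ls: "has_local_section G H f K"
  shows "has_local_section G' H' f' {x \<in> carrier H'. \<phi> x \<in> K}"
proof -
  define K' where "K' = {x \<in> carrier H'. \<phi> x \<in> K}"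
  have sK': "subgroup K' H'" unfolding K'_def by (rule preimage_subgroup[OF assms(2) assms(4) assms(8) sg])
  obtain s where s: "local_section G H f K s" using ls unfolding has_local_section_def by blast
  define L where "L = H'\<lparr>carrier := K'\<rparr>"
  have gL: "group L" unfolding L_def by (rule subgroup.subgroup_is_group[OF sK' assms(4)])
  have aL: "id \<in> hom L H'" unfolding L_def hom_def using sK' subgroup.subset by fastforce
  have bL: "(s \<circ> \<phi>) \<in> hom L G"
  proof (rule homI)
    have sh: "s \<in> hom (H\<lparr>carrier := K\<rparr>) G" and sK: "\<forall>x\<in>K. f (s x) = x"
      using s unfolding local_section_def by auto
    fix x y assume x: "x \<in> carrier L" and y: "y \<in> carrier L"
    have px: "\<phi> x \<in> K" and py: "\<phi> y \<in> K" and cx: "x \<in> carrier H'" and cy: "y \<in> carrier H'"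
      using x y unfolding L_def K'_def by auto
    show "(s \<circ> \<phi>) x \<in> carrier G" using px sh by (simp add: hom_def Pi_def)
    have "\<phi> (x \<otimes>\<^bsub>H'\<^esub> y) = \<phi> x \<otimes>\<^bsub>H\<^esub> \<phi> y"
      using assms(8) cx cy by (simp add: hom_mult)
    moreover have "s (\<phi> x \<otimes>\<^bsub>H\<^esub> \<phi> y) = s (\<phi> x) \<otimes>\<^bsub>G\<^esub> s (\<phi> y)"
      using hom_mult[OF sh, of "\<phi> x" "\<phi> y"] px py by simp
    ultimately show "(s \<circ> \<phi>) (x \<otimes>\<^bsub>L\<^esub> y) = (s \<circ> \<phi>) x \<otimes>\<^bsub>G\<^esub> (s \<circ> \<phi>) y"
      unfolding L_def by simp
  qed
  have comm: "\<forall>x\<in>carrier L. \<phi> (id x) = f ((s \<circ> \<phi>) x)"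
    using s unfolding L_def K'_def local_section_def by auto
  obtain h where h: "h \<in> hom L G'" "\<forall>x\<in>carrier L. f' (h x) = id x \<and> \<phi>' (h x) = (s \<circ> \<phi>) x"
    using wp[unfolded weak_pullback_def, rule_format, of L id "s \<circ> \<phi>"] gL aL bL comm by blast
  have "local_section G' H' f' K' h"
    unfolding local_section_def using sK' h unfolding L_def by auto
  then show ?thesis unfolding has_local_section_def K'_def by blast
qed

theorem theorem3p2:
  fixes G :: "'a monoid" and H :: "'b monoid" and G' :: "'c monoid" and H' :: "'d monoid"
    and f :: "'a \<Rightarrow> 'b" and f' :: "'c \<Rightarrow> 'd" and \<phi>' :: "'c \<Rightarrow> 'a" and \<phi> :: "'d \<Rightarrow> 'b"
  assumes "group G" and "group H" and "group G'" and "group H'"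
    and "f \<in> hom G H" and "f' \<in> hom G' H'" and "\<phi>' \<in> hom G' G" and "\<phi> \<in> hom H' H"
    and "\<forall>x\<in>carrier G'. f (\<phi>' x) = \<phi> (f' x)"
    and "weak_pullback TYPE('d) G H G' H' f f' \<phi>' \<phi>"
    and "\<phi> ` carrier H' = carrier H \<or> \<not> has_global_section G' H' f'"
  shows "sectional_number G' H' f' \<le> sectional_number G H f"
proof -
  have "sec_cover G' H' f' m" if sc: "sec_cover G H f m" for m
  proof -
    obtain Hs where Hs: "\<forall>i<m. subgroup (Hs i) H \<and> Hs i \<noteq> carrier H \<and> has_local_section G H f (Hs i)"
      "(\<Union>i<m. Hs i) = carrier H"
      using sc unfolding sec_cover_def by blast
    define Hs' where "Hs' i = {x \<in> carrier H'. \<phi> x \<in> Hs i}" for i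
    have "\<forall>i<m. subgroup (Hs' i) H' \<and> Hs' i \<noteq> carrier H' \<and> has_local_section G' H' f' (Hs' i)"
    proof (intro allI impI conjI)
      fix i assume i: "i < m"
      show sub: "subgroup (Hs' i) H'" unfolding Hs'_def
        using preimage_subgroup[OF assms(2) assms(4) assms(8)] Hs(1) i by simp
      show ls: "has_local_section G' H' f' (Hs' i)" unfolding Hs'_def
        using cover_transfer[OF assms(1-8) assms(10)] Hs(1) i by simp
      show "Hs' i \<noteq> carrier H'"
      proof
        assume eq: "Hs' i = carrier H'"
        then have "\<phi> ` carrier H' \<subseteq> Hs i" unfolding Hs'_def by auto
        moreover have "Hs i \<subseteq> carrier H" "Hs i \<noteq> carrier H" using Hs(1) i subgroup.subset by auto
        ultimately have "\<phi> ` carrier H' \<noteq> carrier H" by blast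
        moreover have "has_global_section G' H' f'" using ls eq unfolding has_global_section_def by simp
        ultimately show False using assms(11) by simp
      qed
    qed
    moreover have "(\<Union>i<m. Hs' i) = carrier H'"
    proof
      show "(\<Union>i<m. Hs' i) \<subseteq> carrier H'" unfolding Hs'_def by auto
    next
      show "carrier H' \<subseteq> (\<Union>i<m. Hs' i)"
      proof
        fix x assume x: "x \<in> carrier H'"
        then have "\<phi> x \<in> carrier H" using assms(8) by (auto simp: hom_def)
        then obtain i where "i < m" "\<phi> x \<in> Hs i" using Hs(2) by blast
        then show "x \<in> (\<Union>i<m. Hs' i)" unfolding Hs'_def using x by blast
      qed
    qed
    ultimately show ?thesis unfolding sec_cover_def by blast
  qed
  then have "{enat m | m. 0 < m \<and> sec_cover G H f m} \<subseteq> {enat m | m. 0 < m \<and> sec_cover G' H' f' m}"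
    by blast
  then show ?thesis unfolding sectional_number_def by (rule Inf_superset_mono)
qed

end
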